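(* Let $X$ be a compact Hausdorff space and let $a,b,c\in C(X,M_n)$ be positive elements such that $ba=a$ and $cb=b$. Then there exist open sets $U_k\subseteq X$ for $0\le k\le n$, and continuous functions $p_k\colon U_k\to M_n$ whose values are rank $k$ projections, such that: (1) $\bigcup_{k=0}^n U_k=X$; (2) if $k\le l$ and $x\in U_k\cap U_l$ then $p_k(x)\le p_l(x)$; (3) for all $x\in U_k$, $p_k(x)a(x)=a(x)$ and $c(x)p_k(x)=p_k(x)$. *)

theory Defs
  imports "HOL-Analysis.Analysis"
begin

text \<open>Complex n x n matrices M_n are modelled as complex^'n^'n with 'n a finite type,
  n = CARD('n). Adjoint = conjugate transpose.\<close>

definition cadj :: "complex^'n^'m \<Rightarrow> complex^'m^'n" where
  "cadj A = (\<chi> i j. cnj (A $ j $ i))"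

definition mpos :: "complex^'n^'n \<Rightarrow> bool" where
  "mpos A \<longleftrightarrow> (\<exists>B::complex^'n^'n. A = cadj B ** B)"

definition mle :: "complex^'n^'n \<Rightarrow> complex^'n^'n \<Rightarrow> bool" where
  "mle A B \<longleftrightarrow> mpos (B - A)"

definition mproj :: "complex^'n^'n \<Rightarrow> bool" where
  "mproj P \<longleftrightarrow> cadj P = P \<and> P ** P = P"

end

theory Submission
  imports Defs
begin
lemma cadj_nth[simp]: "cadj A $ i $ j = cnj (A $ j $ i)"
  by (simp add: cadj_def)

lemma cadj_cadj[simp]: "cadj (cadj A) = A"
  by (simp add: vec_eq_iff)

lemma cadj_mult: "cadj (A ** B) = cadj B ** cadj A"
  by (simp add: vec_eq_iff matrix_matrix_mult_def mult.commute)

lemma cadj_diff: "cadj (A - B) = cadj A - cadj B"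
  by (simp add: vec_eq_iff)

lemma cadj_add: "cadj (A + B) = cadj A + cadj B"
  by (simp add: vec_eq_iff)

lemma cadj_mat1[simp]: "cadj (mat 1 :: complex^'n^'n) = mat 1"
  by (simp add: vec_eq_iff mat_def)

definition diagm :: "('n \<Rightarrow> complex) \<Rightarrow> complex^'n^'n" where
  "diagm d = (\<chi> i j. if i = j then d i else 0)"

lemma diagm_nth[simp]: "diagm d $ i $ j = (if i = j then d i else 0)"
  by (simp add: diagm_def)

lemma diagm_mult_left: "(diagm d ** M) $ i $ j = d i * M $ i $ j"
  unfolding matrix_matrix_mult_def diagm_def
  by (auto simp: if_distrib if_distribR sum.delta[OF finite] cong: if_cong)

lemma diagm_mult_right: "(M ** diagm d) $ i $ j = M $ i $ j * d j"
  unfolding matrix_matrix_mult_def diagm_def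
  by (auto simp: if_distrib if_distribR sum.delta'[OF finite] cong: if_cong)

lemma matrix_diff_ldistrib: "(A::'a::ring_1^'n^'m) ** (B - C) = A ** B - A ** C"
  by (simp add: vec_eq_iff matrix_matrix_mult_def algebra_simps sum_subtractf)

lemma matrix_diff_rdistrib: "((A::'a::ring_1^'n^'m) - B) ** C = A ** C - B ** C"
  by (simp add: vec_eq_iff matrix_matrix_mult_def algebra_simps sum_subtractf)

lemma diagm_mult: "diagm d ** diagm e = diagm (\<lambda>i. d i * e i)"
  by (simp add: vec_eq_iff diagm_mult_left)

lemma cadj_diagm: "cadj (diagm d) = diagm (\<lambda>i. cnj (d i))"
  by (simp add: vec_eq_iff)

lemma diagm_diff: "diagm d - diagm e = diagm (\<lambda>i. d i - e i)"
  by (simp add: vec_eq_iff)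

lemma diagm_one: "diagm (\<lambda>i. 1) = mat 1"
  by (simp add: vec_eq_iff mat_def)

definition unitary :: "complex^'n^'n \<Rightarrow> bool" where
  "unitary U \<longleftrightarrow> cadj U ** U = mat 1 \<and> U ** cadj U = mat 1"

definition cal :: "complex^'n^'n \<Rightarrow> ('n \<Rightarrow> complex) \<Rightarrow> complex^'n^'n" where
  "cal U d = U ** diagm d ** cadj U"

lemma cal_mult: "unitary U \<Longrightarrow> cal U d ** cal U e = cal U (\<lambda>i. d i * e i)"
proof -
  assume "unitary U"
  then have u: "cadj U ** U = mat 1" by (simp add: unitary_def)
  have "cal U d ** cal U e = U ** diagm d ** (cadj U ** U) ** diagm e ** cadj U"
    unfolding cal_def by (simp add: matrix_mul_assoc)
  also have "\<dots> = U ** (diagm d ** diagm e) ** cadj U"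
    by (simp add: u matrix_mul_assoc)
  finally show ?thesis by (simp add: cal_def diagm_mult)
qed

lemma cal_cadj: "cadj (cal U d) = cal U (\<lambda>i. cnj (d i))"
  unfolding cal_def by (simp add: cadj_mult cadj_diagm matrix_mul_assoc)

lemma cal_diff: "cal U d - cal U e = cal U (\<lambda>i. d i - e i)"
  unfolding cal_def
  by (simp add: matrix_diff_ldistrib matrix_diff_rdistrib flip: diagm_diff)

definition mtrace :: "'a::comm_semiring_1^'n^'n \<Rightarrow> 'a" where
  "mtrace T = (\<Sum>i\<in>UNIV. T $ i $ i)"

lemma mtrace_comm: "mtrace ((A::'a::comm_semiring_1^'n^'m) ** B) = mtrace (B ** A)"
  unfolding mtrace_def matrix_matrix_mult_def
  by (simp add: mult.commute) (rule sum.swap)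

lemma norm_sq_vec: "(norm (v::'a::real_normed_vector^'n))\<^sup>2 = (\<Sum>i\<in>UNIV. (norm (v $ i))\<^sup>2)"
  by (simp add: norm_vec_def L2_set_def sum_nonneg)

lemma norm_sq_mat: "(norm (M::complex^'n^'m))\<^sup>2 = (\<Sum>i\<in>UNIV. \<Sum>j\<in>UNIV. (cmod (M $ i $ j))\<^sup>2)"
  by (simp add: norm_sq_vec)

lemma norm_sq_trace: "complex_of_real ((norm (M::complex^'n^'m))\<^sup>2) = mtrace (cadj M ** M)"
proof -
  have "complex_of_real ((norm M)\<^sup>2) = (\<Sum>i\<in>UNIV. \<Sum>j\<in>UNIV. complex_of_real ((cmod (M $ i $ j))\<^sup>2))"
    by (simp add: norm_sq_mat)
  also have "\<dots> = (\<Sum>i\<in>UNIV. \<Sum>j\<in>UNIV. cnj (M $ i $ j) * M $ i $ j)"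
    by (simp add: complex_norm_square mult.commute del: of_real_power)
  also have "\<dots> = mtrace (cadj M ** M)"
    unfolding mtrace_def matrix_matrix_mult_def by (simp add: cadj_def) (rule sum.swap)
  finally show ?thesis .
qed

lemma norm_eq_from_sq: "complex_of_real ((norm x)\<^sup>2) = complex_of_real ((norm y)\<^sup>2) \<Longrightarrow> norm x = norm y"
  by (metis norm_ge_zero of_real_eq_iff power2_eq_iff_nonneg)

lemma norm_cadj: "norm (cadj (M::complex^'n^'m)) = norm M"
  by (rule norm_eq_from_sq) (unfold norm_sq_trace cadj_cadj, rule mtrace_comm)

lemma norm_unitary_left:
  assumes "cadj V ** V = mat 1"
  shows "norm (V ** (M::complex^'n^'m)) = norm M"
proof (rule norm_eq_from_sq)
  have "cadj (V ** M) ** (V ** M) = cadj M ** (cadj V ** V) ** M"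
    by (simp add: cadj_mult matrix_mul_assoc)
  then show "complex_of_real ((norm (V ** M))\<^sup>2) = complex_of_real ((norm M)\<^sup>2)"
    unfolding norm_sq_trace by (simp add: assms)
qed

lemma norm_unitary_right:
  assumes "U ** cadj U = mat 1"
  shows "norm ((M::complex^'n^'m) ** U) = norm M"
proof -
  have "norm (M ** U) = norm (cadj (M ** U))" by (simp add: norm_cadj)
  also have "\<dots> = norm (cadj U ** cadj M)" by (simp add: cadj_mult)
  also have "\<dots> = norm (cadj M)" by (rule norm_unitary_left) (simp add: assms)
  finally show ?thesis by (simp add: norm_cadj)
qed

lemma norm_entrywise_le:
  assumes "L \<ge> 0" and "\<And>i j. cmod ((A::complex^'n^'m) $ i $ j) \<le> L * cmod ((B::complex^'n^'m) $ i $ j)"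
  shows "norm A \<le> L * norm B"
proof -
  have le: "(cmod (A $ i $ j))\<^sup>2 \<le> L\<^sup>2 * (cmod (B $ i $ j))\<^sup>2" for i j
  proof -
    have "(cmod (A $ i $ j))\<^sup>2 \<le> (L * cmod (B $ i $ j))\<^sup>2"
      by (rule power_mono[OF assms(2)]) simp
    then show ?thesis by (simp add: power_mult_distrib)
  qed
  have "(norm A)\<^sup>2 \<le> (\<Sum>i\<in>UNIV. \<Sum>j\<in>UNIV. L\<^sup>2 * (cmod (B $ i $ j))\<^sup>2)"
    unfolding norm_sq_mat by (intro sum_mono le)
  also have "\<dots> = (L * norm B)\<^sup>2"
    unfolding power_mult_distrib norm_sq_mat sum_distrib_left ..
  finally have "(norm A)\<^sup>2 \<le> (L * norm B)\<^sup>2" .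
  then show ?thesis by (rule power2_le_imp_le) (use assms(1) in simp)
qed

lemma unitary_cadj: "unitary U \<Longrightarrow> unitary (cadj U)"
  by (simp add: unitary_def)

lemma norm_cal: "unitary U \<Longrightarrow> norm (cal U d) = norm (diagm d)"
  unfolding cal_def unitary_def
  by (simp add: norm_unitary_left norm_unitary_right)

lemma norm_sq_diagm: "(norm (diagm d))\<^sup>2 = (\<Sum>i\<in>UNIV. (cmod (d i))\<^sup>2)"
proof -
  have "\<And>i. (\<Sum>j\<in>UNIV. (cmod (diagm d $ i $ j))\<^sup>2) = (cmod (d i))\<^sup>2"
  proof -
    fix i
    have "(\<Sum>j\<in>UNIV. (cmod (diagm d $ i $ j))\<^sup>2) = (\<Sum>j\<in>UNIV. if i = j then (cmod (d i))\<^sup>2 else 0)"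
      by (rule sum.cong) auto
    then show "(\<Sum>j\<in>UNIV. (cmod (diagm d $ i $ j))\<^sup>2) = (cmod (d i))\<^sup>2" by simp
  qed
  then show ?thesis by (simp add: norm_sq_mat)
qed

lemma norm_diagm_ge: "cmod (d i) \<le> norm (diagm d)"
proof -
  have "(cmod (d i))\<^sup>2 \<le> (norm (diagm d))\<^sup>2"
    unfolding norm_sq_diagm by (rule member_le_sum) auto
  then show ?thesis by (rule power2_le_imp_le) simp
qed

definition cinner :: "complex^'n \<Rightarrow> complex^'n \<Rightarrow> complex" where
  "cinner v w = (\<Sum>i\<in>UNIV. v $ i * cnj (w $ i))"

lemma cinner_add_left: "cinner (u + v) w = cinner u w + cinner v w"
  by (simp add: cinner_def algebra_simps sum.distrib)
lemma cinner_diff_left: "cinner (u - v) w = cinner u w - cinner v w"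
  by (simp add: cinner_def algebra_simps sum_subtractf)
lemma cinner_scale_left: "cinner (c *s v) w = c * cinner v w"
  by (simp add: cinner_def algebra_simps sum_distrib_left)
lemma cinner_add_right: "cinner u (v + w) = cinner u v + cinner u w"
  by (simp add: cinner_def algebra_simps sum.distrib)
lemma cinner_diff_right: "cinner u (v - w) = cinner u v - cinner u w"
  by (simp add: cinner_def algebra_simps sum_subtractf)
lemma cinner_scale_right: "cinner v (c *s w) = cnj c * cinner v w"
  by (simp add: cinner_def algebra_simps sum_distrib_left)
lemma cinner_sym: "cinner w v = cnj (cinner v w)"
  by (simp add: cinner_def mult.commute)
lemma cinner_zero_left[simp]: "cinner 0 w = 0"
  by (simp add: cinner_def)
lemma cinner_zero_right[simp]: "cinner v 0 = 0"
  by (simp add: cinner_def)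
lemma cinner_self: "cinner v v = complex_of_real ((norm v)\<^sup>2)"
  by (simp add: cinner_def norm_sq_vec complex_norm_square del: of_real_power)
lemma cinner_sum_left: "cinner (\<Sum>j\<in>S. f j) w = (\<Sum>j\<in>S. cinner (f j) w)"
  by (induct S rule: infinite_finite_induct) (simp_all add: cinner_add_left)
lemma cinner_mat: "cinner (A *v v) w = cinner v (cadj A *v w)"
  unfolding cinner_def matrix_vector_mult_def
  by (simp add: sum_distrib_left sum_distrib_right mult_ac) (rule sum.swap)
lemma mat_scale: "(A::'a::comm_ring_1^'n^'m) *v (c *s v) = c *s (A *v v)"
  by (simp add: vec_eq_iff matrix_vector_mult_def sum_distrib_left mult_ac)
lemma mat_vadd: "(A::'a::comm_ring_1^'n^'m) *v (u + v) = A *v u + A *v v"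
  by (simp add: vec_eq_iff matrix_vector_mult_def sum.distrib algebra_simps)
lemma mat_vdiff: "(A::'a::comm_ring_1^'n^'m) *v (u - v) = A *v u - A *v v"
  by (simp add: vec_eq_iff matrix_vector_mult_def sum_subtractf algebra_simps)

lemma cont_cinner: "continuous_on UNIV (\<lambda>w. cinner w c)"
  unfolding cinner_def by (intro continuous_intros)

lemma cont_rayleigh: "continuous_on UNIV (\<lambda>w. Re (cinner (B *v w) w))"
  unfolding cinner_def matrix_vector_mult_def by (intro continuous_intros)

lemma real_quad_zero:
  fixes a C :: real
  assumes "\<And>t. a * t + C * t\<^sup>2 \<le> 0" "C \<le> 0" "a \<ge> 0"
  shows "a = 0"
proof (rule ccontr)
  assume "a \<noteq> 0"
  then have a: "a > 0" using assms(3) by simp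
  define t where "t = a / (2 * (1 - C))"
  have t: "t > 0" using a assms(2) by (simp add: t_def)
  have "a + C * t > 0"
  proof -
    have "(1 - C) * t = t - C * t" by (simp add: algebra_simps)
    then have "- C * t \<le> (1 - C) * t" using t by linarith
    also have "\<dots> = a / 2"
    proof -
      have h: "1 - C \<noteq> 0" "2 * (1 - C) \<noteq> 0" "2 - 2 * C \<noteq> 0" using assms(2) by auto
      show ?thesis unfolding t_def using h by (simp add: field_simps)
    qed
    finally show ?thesis using a by linarith
  qed
  then have "t * (a + C * t) > 0" using t by simp
  moreover have "t * (a + C * t) = a * t + C * t\<^sup>2" by (simp add: algebra_simps power2_eq_square)
  ultimately show False using assms(1)[of t] by linarith
qed

lemma norm_smult_vec: "norm (c *s (v::complex^'n)) = cmod c * norm v"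
proof -
  have "(norm (c *s v))\<^sup>2 = (cmod c * norm v)\<^sup>2"
    by (simp add: norm_sq_vec power_mult_distrib norm_mult sum_distrib_left)
  then show ?thesis by (simp add: power2_eq_iff_nonneg)
qed

lemma herm_cinner: "cadj B = B \<Longrightarrow> cinner (B *v u) w = cinner u (B *v w)"
  by (metis cinner_mat)

lemma max_eigen:
  fixes B :: "complex^'n^'n" and W :: "(complex^'n) set"
  assumes herm: "cadj B = B"
    and Wadd: "\<And>u w. u \<in> W \<Longrightarrow> w \<in> W \<Longrightarrow> u + w \<in> W"
    and Wscale: "\<And>c u. u \<in> W \<Longrightarrow> c *s u \<in> W"
    and Wclosed: "closed W"
    and WB: "\<And>u. u \<in> W \<Longrightarrow> B *v u \<in> W"
    and Wne: "w1 \<in> W" "w1 \<noteq> 0"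
  shows "\<exists>w lam. w \<in> W \<and> norm w = 1 \<and> B *v w = complex_of_real lam *s w"
proof -
  have Wdiff: "u - w \<in> W" if "u \<in> W" "w \<in> W" for u w
    using Wadd[OF that(1) Wscale[OF that(2), of "-1"]] by simp
  let ?K = "W \<inter> {w. norm w = 1}"
  let ?q = "\<lambda>w. Re (cinner (B *v w) w)"
  have "compact ?K"
  proof (subst compact_eq_bounded_closed, intro conjI)
    show "bounded ?K" by (rule bounded_subset[of "cball 0 1"]) auto
    have "closed {w::complex^'n. norm w = 1}"
      using closed_sphere[of 0 1] by (simp add: sphere_def dist_norm)
    then show "closed ?K" using Wclosed by auto
  qed
  moreover have "?K \<noteq> {}"
  proof -
    have "complex_of_real (1 / norm w1) *s w1 \<in> ?K"
      using Wne Wscale by (simp add: norm_smult_vec norm_divide)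
    then show ?thesis by blast
  qed
  moreover have "continuous_on ?K ?q"
    by (rule continuous_on_subset[OF cont_rayleigh]) simp
  ultimately have "\<exists>x\<in>?K. \<forall>y\<in>?K. ?q y \<le> ?q x"
    by (rule continuous_attains_sup)
  then obtain w0 where w0: "w0 \<in> ?K" and max: "\<And>y. y \<in> ?K \<Longrightarrow> ?q y \<le> ?q w0"
    by blast
  define l where "l = ?q w0"
  have bound: "?q u \<le> l * (norm u)\<^sup>2" if "u \<in> W" for u
  proof (cases "u = 0")
    case True then show ?thesis by simp
  next
    case False
    define c where "c = complex_of_real (1 / norm u)"
    have "c *s u \<in> ?K"
      using that False Wscale by (simp add: c_def norm_smult_vec norm_divide)
    then have "?q (c *s u) \<le> l" using max l_def by blast
    moreover have "?q (c *s u) = ?q u / (norm u)\<^sup>2"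
      by (simp add: c_def mat_scale cinner_scale_left cinner_scale_right power2_eq_square)
    ultimately show ?thesis using False by (simp add: field_simps)
  qed
  define M where "M = (\<lambda>u. B *v u - complex_of_real l *s u)"
  have MW: "M u \<in> W" if "u \<in> W" for u
    using that by (simp add: M_def Wdiff WB Wscale)
  have Mlin: "M (u + complex_of_real t *s v) = M u + complex_of_real t *s M v" for u v t
    by (simp add: M_def mat_vadd mat_scale vec_eq_iff algebra_simps)
  have Mherm: "cinner (M u) v = cinner u (M v)" for u v
    by (simp add: M_def cinner_diff_left cinner_diff_right cinner_scale_left cinner_scale_right
        herm_cinner[OF herm])
  have QW: "Re (cinner (M u) u) \<le> 0" if "u \<in> W" for u
  proof -
    have "Re (cinner (M u) u) = ?q u - l * (norm u)\<^sup>2"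
      by (simp add: M_def cinner_diff_left cinner_scale_left cinner_self)
    then show ?thesis using bound[OF that] by simp
  qed
  define g where "g = M w0"
  have gW: "g \<in> W" using w0 MW g_def by simp
  have Q0: "Re (cinner g w0) = 0"
    using w0 by (simp add: g_def M_def cinner_diff_left cinner_scale_left cinner_self l_def)
  have "\<And>t. (2 * (norm g)\<^sup>2) * t + Re (cinner (M g) g) * t\<^sup>2 \<le> 0"
  proof -
    fix t :: real
    have uW: "w0 + complex_of_real t *s g \<in> W" using w0 gW Wadd Wscale by simp
    have "cinner (M (w0 + complex_of_real t *s g)) (w0 + complex_of_real t *s g)
        = cinner g w0 + complex_of_real t * cinner g g + complex_of_real t * cinner (M g) w0
          + complex_of_real t * complex_of_real t * cinner (M g) g"
      unfolding Mlin g_def[symmetric]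
      by (simp only: cinner_add_left cinner_add_right cinner_scale_left cinner_scale_right
          complex_cnj_complex_of_real) (simp add: algebra_simps)
    also have "cinner (M g) w0 = cinner g g" by (simp add: Mherm g_def)
    finally have "Re (cinner (M (w0 + complex_of_real t *s g)) (w0 + complex_of_real t *s g))
       = (2 * (norm g)\<^sup>2) * t + Re (cinner (M g) g) * t\<^sup>2"
      using Q0 by (simp add: cinner_self del: of_real_power) (simp add: power2_eq_square)
    then show "(2 * (norm g)\<^sup>2) * t + Re (cinner (M g) g) * t\<^sup>2 \<le> 0"
      using QW[OF uW] by simp
  qed
  then have "2 * (norm g)\<^sup>2 = 0"
    by (rule real_quad_zero) (use QW[OF gW] in auto)
  then have "g = 0" by simp
  then have "B *v w0 = complex_of_real l *s w0" by (simp add: g_def M_def)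
  then show ?thesis using w0 by blast
qed

lemma exists_orth:
  fixes v :: "'n::finite \<Rightarrow> complex^'n"
  assumes orth: "\<forall>j\<in>S. \<forall>k\<in>S. cinner (v j) (v k) = (if j = k then 1 else 0)"
    and card: "card S < CARD('n)"
  shows "\<exists>w. w \<noteq> 0 \<and> (\<forall>j\<in>S. cinner w (v j) = 0)"
proof (rule ccontr)
  assume H: "\<not> ?thesis"
  have fin: "finite S" by simp
  have ax: "axis i 1 \<in> vec.span (v ` S)" for i
  proof -
    define e :: "complex^'n" where "e = axis i 1"
    define r where "r = e - (\<Sum>j\<in>S. cinner e (v j) *s v j)"
    have "cinner r (v k) = 0" if k: "k \<in> S" for k
    proof -
      have "(\<Sum>j\<in>S. cinner e (v j) * cinner (v j) (v k)) = (\<Sum>j\<in>S. if j = k then cinner e (v k) else 0)"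
        by (rule sum.cong) (use orth k in auto)
      also have "\<dots> = cinner e (v k)" using k fin by simp
      finally show ?thesis
        by (simp add: r_def cinner_diff_left cinner_sum_left cinner_scale_left)
    qed
    then have "r = 0" using H by blast
    then have "e = (\<Sum>j\<in>S. cinner e (v j) *s v j)" by (simp add: r_def)
    also have "\<dots> \<in> vec.span (v ` S)"
      by (intro vec.span_sum vec.span_scale vec.span_base) simp
    finally show ?thesis by (simp add: e_def)
  qed
  have "cart_basis \<subseteq> vec.span (v ` S)"
    using ax by (auto simp: cart_basis_def)
  then have "vec.span cart_basis \<subseteq> vec.span (v ` S)"
    by (rule vec.span_minimal[OF _ vec.subspace_span])
  then have "(UNIV :: (complex^'n) set) \<subseteq> vec.span (v ` S)" by simp
  then have "vec.dim (UNIV :: (complex^'n) set) \<le> card (v ` S)"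
    by (intro vec.span_card_ge_dim) auto
  also have "\<dots> \<le> card S" by (rule card_image_le[OF fin])
  finally show False
    using card by (simp add: vec.dim_UNIV card_cart_basis)
qed

lemma eigen_family_S:
  fixes B :: "complex^'n::finite^'n"
  assumes herm: "cadj B = B"
  shows "finite (S::'n set) \<Longrightarrow> \<exists>v lam. (\<forall>j\<in>S. \<forall>k\<in>S. cinner (v j) (v k) = (if j = k then 1 else 0))
            \<and> (\<forall>j\<in>S. B *v v j = complex_of_real (lam j) *s v j)"
proof (induct S rule: finite_induct)
  case empty
  show ?case by auto
next
  case (insert i S)
  then obtain v lam where orth: "\<forall>j\<in>S. \<forall>k\<in>S. cinner (v j) (v k) = (if j = k then 1 else 0)"
    and eig: "\<forall>j\<in>S. B *v v j = complex_of_real (lam j) *s v j" by blast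
  have "card S < card (insert i S)" using insert by simp
  also have "\<dots> \<le> CARD('n)" by (meson card_mono finite subset_UNIV)
  finally have cS: "card S < CARD('n)" .
  obtain w1 where w1: "w1 \<noteq> 0" "\<forall>j\<in>S. cinner w1 (v j) = 0"
    using exists_orth[OF orth cS] by blast
  define W where "W = {w. \<forall>j\<in>S. cinner w (v j) = 0}"
  have "\<exists>w l. w \<in> W \<and> norm w = 1 \<and> B *v w = complex_of_real l *s w"
  proof (rule max_eigen[OF herm])
    show "u + w \<in> W" if "u \<in> W" "w \<in> W" for u w
      using that by (simp add: W_def cinner_add_left)
    show "c *s u \<in> W" if "u \<in> W" for c u
      using that by (simp add: W_def cinner_scale_left)
    have "W = (\<Inter>j\<in>S. {w. cinner w (v j) = 0})" by (auto simp: W_def)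
    moreover have "closed {w. cinner w (v j) = 0}" for j
      by (rule closed_Collect_eq) (auto intro: cont_cinner)
    ultimately show "closed W" by auto
    show "B *v u \<in> W" if "u \<in> W" for u
      using that eig by (simp add: W_def herm_cinner[OF herm] cinner_scale_right)
    show "w1 \<in> W" using w1 by (simp add: W_def)
    show "w1 \<noteq> 0" by (rule w1(1))
  qed
  then obtain w l where w: "w \<in> W" "norm w = 1" "B *v w = complex_of_real l *s w" by blast
  define v' where "v' = v(i := w)"
  define lam' where "lam' = lam(i := l)"
  have ww: "cinner w w = 1" using w by (simp add: cinner_self)
  have wv: "cinner w (v k) = 0" "cinner (v k) w = 0" if "k \<in> S" for k
    using w(1) that by (auto simp: W_def cinner_sym[of "v k" w])
  have "\<forall>j\<in>insert i S. \<forall>k\<in>insert i S. cinner (v' j) (v' k) = (if j = k then 1 else 0)"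
    using orth ww wv insert(2) by (auto simp: v'_def)
  moreover have "\<forall>j\<in>insert i S. B *v v' j = complex_of_real (lam' j) *s v' j"
    using eig w insert(2) by (auto simp: v'_def lam'_def)
  ultimately show ?case by blast
qed

lemma spectral:
  fixes B :: "complex^'n::finite^'n"
  assumes herm: "cadj B = B"
  shows "\<exists>U lam. unitary U \<and> B = cal U (\<lambda>i. complex_of_real (lam i))"
proof -
  obtain v :: "'n \<Rightarrow> complex^'n" and lam where orth: "\<forall>j k. cinner (v j) (v k) = (if j = k then 1 else 0)"
    and eig: "\<forall>j. B *v v j = complex_of_real (lam j) *s v j"
    using eigen_family_S[OF herm finite, where S=UNIV] by auto
  define U :: "complex^'n^'n" where "U = (\<chi> r c. v c $ r)"
  have u1: "cadj U ** U = mat 1"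
  proof -
    have "(cadj U ** U) $ j $ k = (if j = k then 1 else 0)" for j k
    proof -
      have "(cadj U ** U) $ j $ k = cinner (v k) (v j)"
        by (simp add: U_def matrix_matrix_mult_def cinner_def mult.commute)
      then show ?thesis using orth by auto
    qed
    then show ?thesis by (simp add: vec_eq_iff mat_def)
  qed
  then have u2: "U ** cadj U = mat 1" by (simp add: matrix_left_right_inverse)
  have BU: "B ** U = U ** diagm (\<lambda>i. complex_of_real (lam i))"
  proof -
    have "(B ** U) $ r $ c = (B *v v c) $ r" for r c
      by (simp add: U_def matrix_matrix_mult_def matrix_vector_mult_def)
    then show ?thesis using eig by (simp add: vec_eq_iff diagm_mult_right U_def mult.commute)
  qed
  have "B = B ** U ** cadj U" by (simp add: u2 flip: matrix_mul_assoc)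
  also have "\<dots> = cal U (\<lambda>i. complex_of_real (lam i))" by (simp add: BU cal_def)
  finally show ?thesis using u1 u2 unitary_def by blast
qed

definition sU :: "complex^'n::finite^'n \<Rightarrow> complex^'n^'n" where
  "sU B = (SOME U. \<exists>lam. unitary U \<and> B = cal U (\<lambda>i. complex_of_real (lam i)))"

definition slam :: "complex^'n::finite^'n \<Rightarrow> 'n \<Rightarrow> real" where
  "slam B = (SOME lam. unitary (sU B) \<and> B = cal (sU B) (\<lambda>i. complex_of_real (lam i)))"

lemma spec_props:
  fixes B :: "complex^'n::finite^'n"
  assumes "cadj B = B"
  shows "unitary (sU B)" "B = cal (sU B) (\<lambda>i. complex_of_real (slam B i))"
proof -
  have "\<exists>U lam. unitary U \<and> B = cal U (\<lambda>i. complex_of_real (lam i))"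
    by (rule spectral[OF assms])
  then have "\<exists>lam. unitary (sU B) \<and> B = cal (sU B) (\<lambda>i. complex_of_real (lam i))"
    unfolding sU_def by (rule someI_ex)
  then have "unitary (sU B) \<and> B = cal (sU B) (\<lambda>i. complex_of_real (slam B i))"
    unfolding slam_def by (rule someI_ex)
  then show "unitary (sU B)" "B = cal (sU B) (\<lambda>i. complex_of_real (slam B i))" by auto
qed

definition fc :: "(real \<Rightarrow> real) \<Rightarrow> complex^'n::finite^'n \<Rightarrow> complex^'n^'n" where
  "fc f B = cal (sU B) (\<lambda>i. complex_of_real (f (slam B i)))"

lemma conj_cal_diff:
  assumes "unitary U" "unitary U'"
  shows "cadj U' ** (cal U' d' - cal U d) ** U = diagm d' ** (cadj U' ** U) - (cadj U' ** U) ** diagm d"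
proof -
  have 1: "cadj U' ** cal U' d' ** U = diagm d' ** (cadj U' ** U)"
  proof -
    have "cadj U' ** cal U' d' ** U = (cadj U' ** U') ** diagm d' ** (cadj U' ** U)"
      by (simp add: cal_def matrix_mul_assoc)
    then show ?thesis using assms(2) by (simp add: unitary_def)
  qed
  have 2: "cadj U' ** cal U d ** U = (cadj U' ** U) ** diagm d ** (cadj U ** U)"
    by (simp add: cal_def matrix_mul_assoc)
  show ?thesis
    using 1 2 assms(1) by (simp add: matrix_diff_ldistrib matrix_diff_rdistrib unitary_def)
qed

lemma norm_conj:
  assumes "unitary U" "unitary U'"
  shows "norm (cadj U' ** M ** U) = norm M"
proof -
  have "norm (cadj U' ** M ** U) = norm (cadj U' ** M)"
    by (rule norm_unitary_right) (use assms(1) in \<open>simp add: unitary_def\<close>)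
  also have "\<dots> = norm M"
    by (rule norm_unitary_left) (use assms(2) in \<open>simp add: unitary_def\<close>)
  finally show ?thesis .
qed

lemma fc_lipschitz:
  fixes B B' :: "complex^'n::finite^'n"
  assumes hB: "cadj B = B" and hB': "cadj B' = B'" and L: "L \<ge> 0"
    and f: "\<And>x y. \<bar>f x - f y\<bar> \<le> L * \<bar>x - y\<bar>"
  shows "norm (fc f B' - fc f B) \<le> L * norm (B' - B)"
proof -
  let ?U = "sU B" and ?U' = "sU B'" and ?l = "slam B" and ?m = "slam B'"
  note u = spec_props[OF hB] and u' = spec_props[OF hB']
  let ?W = "cadj ?U' ** ?U"
  have eF: "cadj ?U' ** (fc f B' - fc f B) ** ?U
      = diagm (\<lambda>i. complex_of_real (f (?m i))) ** ?W - ?W ** diagm (\<lambda>i. complex_of_real (f (?l i)))"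
    unfolding fc_def by (rule conj_cal_diff[OF u(1) u'(1)])
  have eB: "cadj ?U' ** (B' - B) ** ?U
      = diagm (\<lambda>i. complex_of_real (?m i)) ** ?W - ?W ** diagm (\<lambda>i. complex_of_real (?l i))"
    using conj_cal_diff[OF u(1) u'(1)] u(2) u'(2) by metis
  have "norm (cadj ?U' ** (fc f B' - fc f B) ** ?U) \<le> L * norm (cadj ?U' ** (B' - B) ** ?U)"
  proof (rule norm_entrywise_le[OF L])
    fix i j
    have "cmod ((cadj ?U' ** (fc f B' - fc f B) ** ?U) $ i $ j)
        = \<bar>f (?m i) - f (?l j)\<bar> * cmod (?W $ i $ j)"
      unfolding eF by (simp add: diagm_mult_left diagm_mult_right algebra_simps norm_mult
          flip: left_diff_distrib of_real_diff)
    also have "\<dots> \<le> L * \<bar>?m i - ?l j\<bar> * cmod (?W $ i $ j)"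
      by (rule mult_right_mono[OF f]) simp
    also have "\<dots> = L * cmod ((cadj ?U' ** (B' - B) ** ?U) $ i $ j)"
      unfolding eB by (simp add: diagm_mult_left diagm_mult_right algebra_simps norm_mult
          flip: left_diff_distrib of_real_diff)
    finally show "cmod ((cadj ?U' ** (fc f B' - fc f B) ** ?U) $ i $ j)
        \<le> L * cmod ((cadj ?U' ** (B' - B) ** ?U) $ i $ j)" .
  qed
  then show ?thesis by (simp add: norm_conj[OF u(1) u'(1)])
qed

lemma fc_cont:
  assumes L: "L \<ge> 0" and f: "\<And>x y. \<bar>f x - f y\<bar> \<le> L * \<bar>x - y\<bar>"
  shows "continuous_on {B::complex^'n::finite^'n. cadj B = B} (fc f)"
  unfolding continuous_on_iff
proof (intro ballI allI impI)
  fix B e assume B: "B \<in> {B::complex^'n::finite^'n. cadj B = B}" and e: "(0::real) < e"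
  show "\<exists>d>0. \<forall>B'\<in>{B. cadj B = B}. dist B' B < d \<longrightarrow> dist (fc f B') (fc f B) < e"
  proof (intro exI[of _ "e / (L + 1)"] conjI ballI impI)
    show "e / (L + 1) > 0" using e L by simp
    fix B' assume B': "B' \<in> {B. cadj B = B}" and d: "dist B' B < e / (L + 1)"
    have "dist (fc f B') (fc f B) \<le> L * dist B' B"
      using fc_lipschitz[of B B' L f] B B' L f by (simp add: dist_norm)
    also have "\<dots> \<le> L * (e / (L + 1))" using d L by (intro mult_left_mono) auto
    also have "\<dots> < e" using e L by (simp add: field_simps)
    finally show "dist (fc f B') (fc f B) < e" .
  qed
qed

lemma cont_map_fc:
  assumes L: "L \<ge> 0" and f: "\<And>x y. \<bar>f x - f y\<bar> \<le> L * \<bar>x - y\<bar>"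
    and b: "continuous_map X euclidean b" and hb: "\<forall>x\<in>topspace X. cadj (b x) = b x"
  shows "continuous_map X euclidean (\<lambda>x. fc f (b x :: complex^'n::finite^'n))"
proof -
  have "continuous_map X (top_of_set {B::complex^'n^'n. cadj B = B}) b"
    by (rule continuous_map_into_subtopology[OF b]) (use hb in auto)
  moreover have "continuous_map (top_of_set {B::complex^'n^'n. cadj B = B}) euclidean (fc f)"
    using fc_cont[OF L f] by (simp add: continuous_map_iff_continuous)
  ultimately have "continuous_map X euclidean (fc f \<circ> b)" by (rule continuous_map_compose)
  then show ?thesis by (simp add: comp_def)
qed

lemma cal_fix:
  assumes U: "unitary U" and B: "B = cal U (\<lambda>i. complex_of_real (lam i))"
    and BA: "B ** A = A" and d: "\<And>i. lam i = 1 \<Longrightarrow> d i = 1"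
  shows "cal U d ** A = A"
proof -
  let ?Y = "cadj U ** A"
  have "cadj U ** B = diagm (\<lambda>i. complex_of_real (lam i)) ** cadj U"
    using U by (simp add: B cal_def matrix_mul_assoc unitary_def)
  then have eq: "diagm (\<lambda>i. complex_of_real (lam i)) ** ?Y = ?Y"
    by (metis BA matrix_mul_assoc)
  have Y: "complex_of_real (lam i) * ?Y $ i $ j = ?Y $ i $ j" for i j
  proof -
    have "(diagm (\<lambda>i. complex_of_real (lam i)) ** ?Y) $ i $ j = ?Y $ i $ j" by (simp only: eq)
    then show ?thesis by (simp only: diagm_mult_left)
  qed
  have dY: "diagm d ** ?Y = ?Y"
  proof -
    have "d i * ?Y $ i $ j = ?Y $ i $ j" for i j
    proof (cases "lam i = 1")
      case True then show ?thesis using d by simp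
    next
      case False
      then have "complex_of_real (lam i) \<noteq> 1" by simp
      then have "?Y $ i $ j = 0" using Y[of i j] by simp
      then show ?thesis by simp
    qed
    then show ?thesis by (simp add: vec_eq_iff diagm_mult_left)
  qed
  have "cal U d ** A = U ** (diagm d ** ?Y)" by (simp add: cal_def matrix_mul_assoc)
  also have "\<dots> = U ** ?Y" by (simp only: dY)
  also have "\<dots> = A" using U by (simp add: matrix_mul_assoc unitary_def)
  finally show ?thesis .
qed

lemma cal_range:
  assumes U: "unitary U" and B: "B = cal U (\<lambda>i. complex_of_real (lam i))"
    and CB: "C ** B = B" and d: "\<And>i. lam i = 0 \<Longrightarrow> d i = 0"
  shows "C ** cal U d = cal U d"
proof -
  define h where "h i = (if lam i = 0 then 0 else d i / complex_of_real (lam i))" for i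
  have "(\<lambda>i. complex_of_real (lam i) * h i) = d"
    using d by (auto simp: h_def)
  then have "cal U d = B ** cal U h" by (simp add: cal_mult[OF U] B)
  then show ?thesis by (simp add: matrix_mul_assoc CB)
qed

lemma cal_proj:
  assumes U: "unitary U" and d: "\<And>i. d i = 0 \<or> d i = 1"
  shows "mproj (cal U d)"
proof -
  have c: "(\<lambda>i. cnj (d i)) = d"
  proof
    fix i show "cnj (d i) = d i" using d[of i] by auto
  qed
  have m: "(\<lambda>i. d i * d i) = d"
  proof
    fix i show "d i * d i = d i" using d[of i] by auto
  qed
  show ?thesis unfolding mproj_def by (simp add: cal_cadj c cal_mult[OF U] m)
qed

lemma proj_pos: "mproj P \<Longrightarrow> mpos P"
  unfolding mproj_def mpos_def by (intro exI[of _ P]) simp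

lemma mpos_herm: "mpos A \<Longrightarrow> cadj A = A"
  unfolding mpos_def by (auto simp: cadj_mult)

lemma rows_eq: "rows A = range (\<lambda>i. A $ i)"
  by (auto simp: rows_def row_def vec_nth_inverse)

lemma row_mult: "(M ** N) $ i = (\<Sum>j\<in>UNIV. M $ i $ j *s N $ j)"
  by (simp add: vec_eq_iff matrix_matrix_mult_def sum_component)

lemma vm_add: "(x + y) v* M = x v* M + y v* M"
  by (simp add: vec_eq_iff vector_matrix_mult_def algebra_simps sum.distrib)
lemma vm_scale: "(c *s x) v* (M::'a::comm_ring_1^'n^'m) = c *s (x v* M)"
  by (simp add: vec_eq_iff vector_matrix_mult_def sum_distrib_left mult_ac)
lemma vm_zero: "(0::'a::comm_ring_1^'m) v* M = 0"
  by (simp add: vec_eq_iff vector_matrix_mult_def)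
lemma vm_row: "(V $ j) v* U = (V ** U) $ j"
  by (simp add: vec_eq_iff vector_matrix_mult_def matrix_matrix_mult_def)

lemma row_comb: "finite T \<Longrightarrow> (\<Sum>j\<in>T. c j *s (V $ j)) v* (U::'a::comm_ring_1^'n^'m) = (\<Sum>j\<in>T. c j *s ((V ** U) $ j))"
  by (induct T rule: finite_induct) (simp_all add: vm_zero vm_add vm_scale vm_row)

lemma rank_cal:
  fixes U :: "complex^'n::finite^'n"
  assumes U: "unitary U"
  shows "rank (cal U d) = card {i. d i \<noteq> 0}"
proof -
  let ?P = "cal U d" and ?V = "cadj U"
  define T where "T = {j. d j \<noteq> 0}"
  define R where "R = (\<lambda>j. ?V $ j) ` T"
  have VU: "?V ** U = mat 1" and UV: "U ** ?V = mat 1" using U by (auto simp: unitary_def)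
  have dV: "(diagm d ** ?V) $ j = d j *s ?V $ j" for j
    by (simp add: vec_eq_iff diagm_mult_left)
  have P1: "?P $ i \<in> vec.span R" for i
  proof -
    have "?P = U ** (diagm d ** ?V)" by (simp add: cal_def matrix_mul_assoc)
    then have "?P $ i = (U ** (diagm d ** ?V)) $ i" by simp
    also have "\<dots> = (\<Sum>j\<in>UNIV. U $ i $ j *s (d j *s ?V $ j))"
      by (subst row_mult) (simp only: dV)
    also have "\<dots> \<in> vec.span R"
    proof (rule vec.span_sum)
      fix j
      show "U $ i $ j *s (d j *s ?V $ j) \<in> vec.span R"
      proof (cases "d j = 0")
        case True then show ?thesis by (simp add: vec.span_zero)
      next
        case False
        then have "?V $ j \<in> R" by (simp add: R_def T_def)
        then show ?thesis by (intro vec.span_scale vec.span_base)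
      qed
    qed
    finally show ?thesis .
  qed
  have P2: "?V $ j \<in> vec.span (rows ?P)" if "j \<in> T" for j
  proof -
    have "?V ** ?P = diagm d ** ?V"
    proof -
      have "?V ** ?P = (?V ** U) ** diagm d ** ?V" by (simp add: cal_def matrix_mul_assoc)
      then show ?thesis by (simp add: VU)
    qed
    then have "d j *s ?V $ j = (?V ** ?P) $ j" by (simp add: dV)
    also have "\<dots> = (\<Sum>i\<in>UNIV. ?V $ j $ i *s ?P $ i)" by (rule row_mult)
    also have "\<dots> \<in> vec.span (rows ?P)"
      by (intro vec.span_sum vec.span_scale vec.span_base) (auto simp: rows_eq)
    finally have "inverse (d j) *s (d j *s ?V $ j) \<in> vec.span (rows ?P)"
      by (rule vec.span_scale)
    then show ?thesis using that by (simp add: T_def vector_smult_assoc)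
  qed
  have "vec.span (rows ?P) \<subseteq> vec.span R"
    by (rule vec.span_minimal[OF _ vec.subspace_span]) (auto simp: rows_eq P1)
  moreover have "vec.span R \<subseteq> vec.span (rows ?P)"
    by (rule vec.span_minimal[OF _ vec.subspace_span]) (auto simp: R_def P2)
  ultimately have sp: "vec.span (rows ?P) = vec.span R" by blast
  have inj: "inj_on (\<lambda>j. ?V $ j) T"
  proof (rule inj_onI)
    fix j k assume "?V $ j = ?V $ k"
    then have "(?V ** U) $ j = (?V ** U) $ k" by (simp add: row_mult)
    then have "(mat 1 :: complex^'n^'n) $ j $ j = mat 1 $ k $ j" by (simp add: VU)
    then show "j = k" by (simp add: mat_def split: if_splits)
  qed
  have indep: "vec.independent R"
  proof (rule vec.independent_if_scalars_zero)
    show "finite R" by (simp add: R_def)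
    fix f x assume sum0: "(\<Sum>x\<in>R. f x *s x) = 0" and x: "x \<in> R"
    then obtain k where k: "k \<in> T" "x = ?V $ k" by (auto simp: R_def)
    have "(\<Sum>j\<in>T. f (?V $ j) *s ?V $ j) = 0"
      using sum0 by (simp add: R_def sum.reindex[OF inj])
    then have "(\<Sum>j\<in>T. f (?V $ j) *s ?V $ j) v* U = 0" by (simp add: vm_zero)
    then have "(\<Sum>j\<in>T. f (?V $ j) *s ((mat 1 :: complex^'n^'n) $ j)) = 0"
      by (simp add: row_comb VU)
    then have "(\<Sum>j\<in>T. f (?V $ j) *s ((mat 1 :: complex^'n^'n) $ j)) $ k = 0" by simp
    then have "(\<Sum>j\<in>T. if j = k then f (?V $ j) else 0) = 0"
      by (simp add: sum_component mat_def if_distrib cong: if_cong)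
    then show "f x = 0" using k by simp
  qed
  have "rank ?P = vec.dim (rows ?P)" by (simp add: row_rank_def_gen)
  also have "\<dots> = vec.dim (vec.span (rows ?P))" by (simp add: vec.dim_span)
  also have "\<dots> = vec.dim R" by (simp add: sp vec.dim_span)
  also have "\<dots> = card R" by (rule vec.dim_eq_card_independent[OF indep])
  also have "\<dots> = card T" unfolding R_def by (rule card_image[OF inj])
  finally show ?thesis by (simp add: T_def)
qed

lemma clip_lip: "\<bar>max 0 (min 1 a) - max 0 (min 1 b)\<bar> \<le> \<bar>a - b\<bar>" for a b :: real
  unfolding max_def min_def by (auto split: if_splits)

lemma h_lip:
  fixes x y s \<delta> :: real
  assumes "\<delta> > 0"
  shows "\<bar>max 0 (min 1 (2 - 2 * \<bar>x - s\<bar> / \<delta>)) - max 0 (min 1 (2 - 2 * \<bar>y - s\<bar> / \<delta>))\<bar>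
         \<le> (2 / \<delta>) * \<bar>x - y\<bar>"
proof -
  have e: "(2 - 2 * \<bar>x - s\<bar> / \<delta>) - (2 - 2 * \<bar>y - s\<bar> / \<delta>) = (2 / \<delta>) * (\<bar>y - s\<bar> - \<bar>x - s\<bar>)"
    by (simp add: right_diff_distrib)
  have "\<bar>(2 - 2 * \<bar>x - s\<bar> / \<delta>) - (2 - 2 * \<bar>y - s\<bar> / \<delta>)\<bar> = (2 / \<delta>) * \<bar>\<bar>y - s\<bar> - \<bar>x - s\<bar>\<bar>"
  proof -
    have "\<bar>2 / \<delta>\<bar> = 2 / \<delta>" using assms by simp
    then show ?thesis unfolding e by (simp only: abs_mult)
  qed
  also have "\<dots> \<le> (2 / \<delta>) * \<bar>x - y\<bar>"
    using assms by (intro mult_left_mono) auto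
  finally show ?thesis using clip_lip order_trans by blast
qed

lemma f_lip:
  fixes x y s \<delta> :: real
  assumes "\<delta> > 0"
  shows "\<bar>max 0 (min 1 ((x - s + \<delta> / 2) / \<delta>)) - max 0 (min 1 ((y - s + \<delta> / 2) / \<delta>))\<bar>
         \<le> (1 / \<delta>) * \<bar>x - y\<bar>"
proof -
  have e: "(x - s + \<delta> / 2) / \<delta> - (y - s + \<delta> / 2) / \<delta> = (1 / \<delta>) * (x - y)"
    by (simp add: diff_divide_distrib[symmetric])
  have "\<bar>(x - s + \<delta> / 2) / \<delta> - (y - s + \<delta> / 2) / \<delta>\<bar> = (1 / \<delta>) * \<bar>x - y\<bar>"
  proof -
    have "\<bar>1 / \<delta>\<bar> = 1 / \<delta>" using assms by simp
    then show ?thesis unfolding e by (simp only: abs_mult)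
  qed
  then show ?thesis using clip_lip order_trans by metis
qed

lemma card_ord:
  fixes lam :: "'n::finite \<Rightarrow> real"
  assumes "card {i. s < lam i} \<le> card {i. s' < lam i}" "s < lam i"
  shows "s' < lam i"
proof (cases "s' \<le> s")
  case True then show ?thesis using assms(2) by linarith
next
  case False
  then have sub: "{i. s' < lam i} \<subseteq> {i. s < lam i}" by auto
  then have "card {i. s' < lam i} \<le> card {i. s < lam i}" by (intro card_mono) auto
  then have "card {i. s' < lam i} = card {i. s < lam i}" using assms(1) by linarith
  then have "{i. s' < lam i} = {i. s < lam i}" by (intro card_subset_eq sub) auto
  then show ?thesis using assms(2) by blast
qed

lemma norm_sq_cal_ind:
  assumes U: "unitary U" and d: "\<And>i. d i = (if P i then 1 else 0)"
  shows "(norm (cal U d))\<^sup>2 = real (card {i. P i})"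
proof -
  have "(norm (cal U d))\<^sup>2 = (\<Sum>i\<in>UNIV. (cmod (d i))\<^sup>2)"
    by (simp add: norm_cal[OF U] norm_sq_diagm)
  also have "\<dots> = (\<Sum>i\<in>UNIV. if P i then 1 else 0)"
    by (rule sum.cong) (auto simp: d)
  also have "\<dots> = real (card {i. P i})"
    by (simp flip: sum.inter_filter)
  finally show ?thesis .
qed

lemma cal_zero: "cal (U::complex^'n^'n) (\<lambda>i. 0) = 0"
proof -
  have "diagm (\<lambda>i. 0) = (0::complex^'n^'n)" by (simp add: vec_eq_iff)
  then show ?thesis unfolding cal_def by simp
qed

lemma cont_local:
  assumes "\<And>x. x \<in> S \<Longrightarrow> \<exists>T g. openin X T \<and> x \<in> T \<and> T \<subseteq> S
              \<and> continuous_map X euclidean g \<and> (\<forall>y\<in>T. p y = g y)"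
  shows "continuous_map (subtopology X S) euclidean p"
  unfolding continuous_map_def
proof (intro conjI allI impI)
  show "p \<in> topspace (subtopology X S) \<rightarrow> topspace euclidean" by simp
  fix Ob :: "'b set" assume Ob: "openin euclidean Ob"
  have "openin X {x \<in> topspace X \<inter> S. p x \<in> Ob}"
  proof (subst openin_subopen, intro ballI)
    fix x assume x: "x \<in> {x \<in> topspace X \<inter> S. p x \<in> Ob}"
    then have "x \<in> S" by simp
    from assms[OF this] obtain T g where T: "openin X T" "x \<in> T" "T \<subseteq> S" "continuous_map X euclidean g"
      "\<forall>y\<in>T. p y = g y" by (elim exE conjE)
    have "openin X {y \<in> topspace X. g y \<in> Ob}"
      by (rule openin_continuous_map_preimage[OF T(4) Ob])
    then have "openin X (T \<inter> {y \<in> topspace X. g y \<in> Ob})" by (rule openin_Int[OF T(1)])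
    moreover have "x \<in> T \<inter> {y \<in> topspace X. g y \<in> Ob}" using x T(2,5) by simp
    moreover have "T \<inter> {y \<in> topspace X. g y \<in> Ob} \<subseteq> {x \<in> topspace X \<inter> S. p x \<in> Ob}"
      using T(3,5) by auto
    ultimately show "\<exists>T. openin X T \<and> x \<in> T \<and> T \<subseteq> {x \<in> topspace X \<inter> S. p x \<in> Ob}"
      by (intro exI[of _ "T \<inter> {y \<in> topspace X. g y \<in> Ob}"] conjI)
  qed
  moreover have "{x \<in> topspace (subtopology X S). p x \<in> Ob} = {x \<in> topspace X \<inter> S. p x \<in> Ob} \<inter> S"
    by auto
  ultimately show "openin (subtopology X S) {x \<in> topspace (subtopology X S). p x \<in> Ob}"
    unfolding openin_subtopology by blast
qed

definition valid :: "complex^'n::finite^'n \<Rightarrow> real \<Rightarrow> real \<Rightarrow> nat \<Rightarrow> bool" where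
  "valid B s \<delta> k \<longleftrightarrow> 0 < \<delta> \<and> 0 < s - \<delta> \<and> s + \<delta> < 1 \<and> (\<forall>i. \<delta> < \<bar>slam B i - s\<bar>)
     \<and> card {i. s < slam B i} = k"

definition ind :: "complex^'n::finite^'n \<Rightarrow> real \<Rightarrow> 'n \<Rightarrow> complex" where
  "ind B s i = (if s < slam B i then 1 else 0)"

definition hfun :: "real \<Rightarrow> real \<Rightarrow> real \<Rightarrow> real" where
  "hfun s \<delta> t = max 0 (min 1 (2 - 2 * \<bar>t - s\<bar> / \<delta>))"

definition ffun :: "real \<Rightarrow> real \<Rightarrow> real \<Rightarrow> real" where
  "ffun s \<delta> t = max 0 (min 1 ((t - s + \<delta> / 2) / \<delta>))"

lemma valid_ord:
  assumes "valid B s \<delta> k" "valid B s' \<delta>' l" "k \<le> l" "s < slam B i"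
  shows "s' < slam B i"
  using assms card_ord[of s "slam B" s' i] by (simp add: valid_def)

lemma valid_same:
  assumes "valid B s \<delta> k" "valid B s' \<delta>' k"
  shows "ind B s = ind B s'"
proof
  fix i
  have "s < slam B i \<longleftrightarrow> s' < slam B i"
    using valid_ord[OF assms(1,2)] valid_ord[OF assms(2,1)] by auto
  then show "ind B s i = ind B s' i" by (simp add: ind_def)
qed

lemma ffun_ind:
  assumes "0 < \<delta>" "\<delta> / 2 < \<bar>t - s\<bar>"
  shows "ffun s \<delta> t = (if s < t then 1 else 0)"
proof (cases "s < t")
  case True
  then have "t - s > \<delta> / 2" using assms by linarith
  then have "(t - s + \<delta> / 2) / \<delta> > 1" using assms(1) by (simp add: field_simps)
  then show ?thesis using True by (simp add: ffun_def)
next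
  case False
  then have "t - s < - \<delta> / 2" using assms by linarith
  then have "(t - s + \<delta> / 2) / \<delta> < 0" using assms(1) by (simp add: divide_neg_pos)
  then show ?thesis using False by (simp add: ffun_def)
qed

lemma hfun_zero:
  assumes "0 < \<delta>" "\<delta> < \<bar>t - s\<bar>"
  shows "hfun s \<delta> t = 0"
proof -
  have "2 * \<bar>t - s\<bar> / \<delta> > 2" using assms by (simp add: field_simps)
  then show ?thesis by (simp add: hfun_def)
qed

lemma hfun_one:
  assumes "0 < \<delta>" "\<bar>t - s\<bar> \<le> \<delta> / 2"
  shows "hfun s \<delta> t = 1"
proof -
  have "2 * \<bar>t - s\<bar> / \<delta> \<le> 1" using assms by (simp add: field_simps)
  then show ?thesis by (simp add: hfun_def)
qed

lemma exists_valid: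
  fixes lam :: "'n::finite \<Rightarrow> real"
  shows "\<exists>s \<delta>. 0 < \<delta> \<and> 0 < s - \<delta> \<and> s + \<delta> < 1 \<and> (\<forall>i. \<delta> < \<bar>lam i - s\<bar>)"
proof -
  define O' where "O' = {0<..<(1::real)} - range lam"
  have op: "open O'" unfolding O'_def
    by (intro open_Diff open_greaterThanLessThan finite_imp_closed) simp
  have "O' \<noteq> {}"
  proof
    assume "O' = {}"
    then have "{0<..<(1::real)} \<subseteq> range lam" by (auto simp: O'_def)
    then have "finite {0<..<(1::real)}" by (rule finite_subset) simp
    then show False using infinite_Ioo[of "0::real" 1] by simp
  qed
  then obtain s where s: "s \<in> O'" by blast
  then obtain e where e: "e > 0" "ball s e \<subseteq> O'" using op open_contains_ball by blast
  define \<delta> where "\<delta> = e / 2"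
  have "s - \<delta> \<in> ball s e" "s + \<delta> \<in> ball s e" using e by (auto simp: \<delta>_def dist_real_def)
  then have "s - \<delta> \<in> O'" "s + \<delta> \<in> O'" using e(2) by blast+
  then have "s - \<delta> \<in> {0<..<1}" "s + \<delta> \<in> {0<..<1}" by (simp_all add: O'_def)
  moreover have "\<delta> < \<bar>lam i - s\<bar>" for i
  proof -
    have "lam i \<notin> ball s e" using e(2) by (auto simp: O'_def)
    then have "e \<le> \<bar>lam i - s\<bar>" by (simp add: dist_real_def abs_minus_commute)
    then show ?thesis using e(1) by (simp add: \<delta>_def)
  qed
  ultimately show ?thesis using e(1) by (intro exI[of _ s] exI[of _ \<delta>]) (auto simp: \<delta>_def)
qed

lemma fc_ffun_ind:
  assumes h: "cadj B = B" and v: "valid B s \<delta> k"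
  shows "fc (ffun s \<delta>) B = cal (sU B) (ind B s)"
proof -
  have "(\<lambda>i. complex_of_real (ffun s \<delta> (slam B i))) = ind B s"
  proof
    fix i
    have a: "0 < \<delta>" "\<delta> < \<bar>slam B i - s\<bar>" using v by (auto simp: valid_def)
    then have "\<delta> / 2 < \<bar>slam B i - s\<bar>" by linarith
    then show "complex_of_real (ffun s \<delta> (slam B i)) = ind B s i"
      using v by (simp add: ffun_ind valid_def ind_def)
  qed
  then show ?thesis by (simp add: fc_def)
qed

lemma local_nbhd:
  fixes b :: "'a \<Rightarrow> complex^'n::finite^'n"
  assumes bc: "continuous_map X euclidean b" and hb: "\<forall>x\<in>topspace X. cadj (b x) = b x"
    and x0: "x0 \<in> topspace X" and v0: "valid (b x0) s \<delta> k"
  shows "\<exists>T. openin X T \<and> x0 \<in> T \<and> (\<forall>x\<in>T. valid (b x) s (\<delta> / 2) k)"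
proof -
  have d: "0 < \<delta>" "0 < s - \<delta>" "s + \<delta> < 1" "\<And>i. \<delta> < \<bar>slam (b x0) i - s\<bar>"
    "card {i. s < slam (b x0) i} = k" using v0 by (auto simp: valid_def)
  define H where "H x = fc (hfun s \<delta>) (b x)" for x
  define F where "F x = fc (ffun s \<delta>) (b x)" for x
  define G where "G x = (norm (F x))\<^sup>2" for x
  have cH: "continuous_map X euclidean H"
    unfolding H_def hfun_def
    by (rule cont_map_fc[OF _ h_lip[OF d(1)] bc hb]) (use d(1) in simp)
  have cF: "continuous_map X euclidean F"
    unfolding F_def ffun_def
    by (rule cont_map_fc[OF _ f_lip[OF d(1)] bc hb]) (use d(1) in simp)
  have "continuous_map euclidean euclidean (\<lambda>M::complex^'n^'n. (norm M)\<^sup>2)"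
    by (simp add: continuous_map_iff_continuous2 continuous_intros)
  from continuous_map_compose[OF cF this] have cG: "continuous_map X euclidean G"
    by (simp add: G_def[abs_def] comp_def)
  have H0: "H x0 = 0"
  proof -
    have "(\<lambda>i. complex_of_real (hfun s \<delta> (slam (b x0) i))) = (\<lambda>i. 0)"
      using d(1,4) by (simp add: hfun_zero)
    then show ?thesis by (simp add: H_def fc_def cal_zero)
  qed
  have hx0: "cadj (b x0) = b x0" using hb x0 by simp
  have G0: "G x0 = real k"
    unfolding G_def F_def fc_ffun_ind[OF hx0 v0] using d(5)
    by (simp add: norm_sq_cal_ind[OF spec_props(1)[OF hx0], of _ "\<lambda>i. s < slam (b x0) i"] ind_def)
  define T where "T = {x \<in> topspace X. H x \<in> ball 0 1} \<inter> {x \<in> topspace X. G x \<in> ball (G x0) (1/2)}"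
  have "openin X T" unfolding T_def
    by (intro openin_Int openin_continuous_map_preimage[OF cH] openin_continuous_map_preimage[OF cG]) auto
  moreover have "x0 \<in> T" using x0 H0 by (simp add: T_def)
  moreover have "valid (b x) s (\<delta> / 2) k" if x: "x \<in> T" for x
  proof -
    have xt: "x \<in> topspace X" and Hx: "norm (H x) < 1" and Gx: "\<bar>G x - G x0\<bar> < 1/2"
      using x by (auto simp: T_def dist_norm abs_minus_commute)
    have hx: "cadj (b x) = b x" using hb xt by simp
    note sp = spec_props[OF hx]
    have gap: "\<delta> / 2 < \<bar>slam (b x) i - s\<bar>" for i
    proof (rule ccontr)
      assume "\<not> ?thesis"
      then have "hfun s \<delta> (slam (b x) i) = 1" using d(1) by (intro hfun_one) auto
      then have "1 \<le> norm (H x)"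
        using norm_diagm_ge[of "\<lambda>i. complex_of_real (hfun s \<delta> (slam (b x) i))" i]
        by (simp add: H_def fc_def norm_cal[OF sp(1)])
      then show False using Hx by simp
    qed
    have vx: "valid (b x) s (\<delta> / 2) (card {i. s < slam (b x) i})"
      using d gap by (simp add: valid_def)
    have "fc (ffun s (\<delta> / 2)) (b x) = cal (sU (b x)) (ind (b x) s)"
      by (rule fc_ffun_ind[OF hx vx])
    have Gx': "G x = real (card {i. s < slam (b x) i})"
    proof -
      have "(\<lambda>i. complex_of_real (ffun s \<delta> (slam (b x) i))) = ind (b x) s"
      proof
        fix i show "complex_of_real (ffun s \<delta> (slam (b x) i)) = ind (b x) s i"
          using gap[of i] d(1) by (simp add: ffun_ind ind_def)
      qed
      then have "F x = cal (sU (b x)) (ind (b x) s)" by (simp add: F_def fc_def)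
      then show ?thesis unfolding G_def
        by (simp add: norm_sq_cal_ind[OF sp(1), of _ "\<lambda>i. s < slam (b x) i"] ind_def)
    qed
    have "card {i. s < slam (b x) i} = k"
      using Gx unfolding Gx' G0 by linarith
    then show ?thesis using vx by simp
  qed
  ultimately show ?thesis by blast
qed

lemma point_props:
  fixes B A C :: "complex^'n::finite^'n"
  assumes h: "cadj B = B" and v: "valid B s \<delta> k" and BA: "B ** A = A" and CB: "C ** B = B"
  shows "mproj (cal (sU B) (ind B s))" "rank (cal (sU B) (ind B s)) = k"
    "cal (sU B) (ind B s) ** A = A" "C ** cal (sU B) (ind B s) = cal (sU B) (ind B s)"
proof -
  note sp = spec_props[OF h]
  have d: "0 < \<delta>" "0 < s - \<delta>" "s + \<delta> < 1" "card {i. s < slam B i} = k"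
    using v by (auto simp: valid_def)
  show "mproj (cal (sU B) (ind B s))"
    by (rule cal_proj[OF sp(1)]) (simp add: ind_def)
  have "{i. ind B s i \<noteq> 0} = {i. s < slam B i}" by (auto simp: ind_def)
  then show "rank (cal (sU B) (ind B s)) = k" using d(4) by (simp add: rank_cal[OF sp(1)])
  show "cal (sU B) (ind B s) ** A = A"
    by (rule cal_fix[OF sp(1) sp(2) BA]) (use d in \<open>simp add: ind_def\<close>)
  show "C ** cal (sU B) (ind B s) = cal (sU B) (ind B s)"
    by (rule cal_range[OF sp(1) sp(2) CB]) (use d in \<open>simp add: ind_def\<close>)
qed

theorem lemma3p1:
  fixes X :: "'a topology"
    and a b c :: "'a \<Rightarrow> complex^'n::finite^'n"
  assumes "compact_space X" and "Hausdorff_space X"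
    and "continuous_map X euclidean a"
    and "continuous_map X euclidean b"
    and "continuous_map X euclidean c"
    and "\<forall>x\<in>topspace X. mpos (a x) \<and> mpos (b x) \<and> mpos (c x)"
    and "\<forall>x\<in>topspace X. b x ** a x = a x"
    and "\<forall>x\<in>topspace X. c x ** b x = b x"
  shows "\<exists>(U :: nat \<Rightarrow> 'a set) (p :: nat \<Rightarrow> 'a \<Rightarrow> complex^'n^'n).
           (\<forall>k\<le>CARD('n). openin X (U k)
               \<and> continuous_map (subtopology X (U k)) euclidean (p k)
               \<and> (\<forall>x\<in>U k. mproj (p k x) \<and> rank (p k x) = k))
         \<and> (\<Union>k\<le>CARD('n). U k) = topspace X
         \<and> (\<forall>k l x. k \<le> l \<and> l \<le> CARD('n) \<and> x \<in> U k \<and> x \<in> U l \<longrightarrow> mle (p k x) (p l x))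
         \<and> (\<forall>k\<le>CARD('n). \<forall>x\<in>U k. p k x ** a x = a x \<and> c x ** p k x = p k x)"
proof -
  have bc: "continuous_map X euclidean b" using assms(4) .
  have hb: "\<forall>x\<in>topspace X. cadj (b x) = b x" using assms(6) mpos_herm by blast
  define U :: "nat \<Rightarrow> 'a set" where "U k = {x \<in> topspace X. \<exists>s \<delta>. valid (b x) s \<delta> k}" for k
  define p :: "nat \<Rightarrow> 'a \<Rightarrow> complex^'n^'n"
    where "p k x = cal (sU (b x)) (ind (b x) (SOME s. \<exists>\<delta>. valid (b x) s \<delta> k))" for k x
  have pk: "p k x = cal (sU (b x)) (ind (b x) s)" if "valid (b x) s \<delta> k" for k x s \<delta>
  proof -
    have "\<exists>s \<delta>. valid (b x) s \<delta> k" using that by blast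
    then have "\<exists>\<delta>. valid (b x) (SOME s. \<exists>\<delta>. valid (b x) s \<delta> k) \<delta> k" by (rule someI_ex)
    then obtain \<delta>' where "valid (b x) (SOME s. \<exists>\<delta>. valid (b x) s \<delta> k) \<delta>' k" by blast
    from valid_same[OF this that] show ?thesis by (simp add: p_def)
  qed
  have Usub: "U k \<subseteq> topspace X" for k by (auto simp: U_def)
  have props: "mproj (p k x) \<and> rank (p k x) = k \<and> p k x ** a x = a x \<and> c x ** p k x = p k x"
    if x: "x \<in> U k" for k x
  proof -
    from x obtain s \<delta> where xt: "x \<in> topspace X" and v: "valid (b x) s \<delta> k" by (auto simp: U_def)
    have hx: "cadj (b x) = b x" using hb xt by simp
    have BA: "b x ** a x = a x" using assms(7) xt by simp
    have CB: "c x ** b x = b x" using assms(8) xt by simp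
    show ?thesis using point_props[OF hx v BA CB] pk[OF v] by simp
  qed
  have local: "\<exists>T g. openin X T \<and> x \<in> T \<and> T \<subseteq> U k \<and> continuous_map X euclidean g
      \<and> (\<forall>y\<in>T. p k y = g y)" if x: "x \<in> U k" for k x
  proof -
    from x obtain s \<delta> where xt: "x \<in> topspace X" and v: "valid (b x) s \<delta> k" by (auto simp: U_def)
    obtain T where T: "openin X T" "x \<in> T" "\<forall>y\<in>T. valid (b y) s (\<delta> / 2) k"
      using local_nbhd[OF bc hb xt v] by blast
    have d: "0 < \<delta>" using v by (simp add: valid_def)
    have TU: "T \<subseteq> U k" using T(1,3) openin_subset by (fastforce simp: U_def)
    have cg: "continuous_map X euclidean (\<lambda>y. fc (ffun s (\<delta> / 2)) (b y))"
      unfolding ffun_def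
      by (rule cont_map_fc[OF _ f_lip bc hb]) (use d in simp_all)
    have eq: "p k y = fc (ffun s (\<delta> / 2)) (b y)" if y: "y \<in> T" for y
    proof -
      have yt: "y \<in> topspace X" using y TU Usub by blast
      have hy: "cadj (b y) = b y" using hb yt by simp
      show ?thesis using pk[OF T(3)[rule_format, OF y]] fc_ffun_ind[OF hy T(3)[rule_format, OF y]]
        by simp
    qed
    show ?thesis using T(1,2) TU cg eq by blast
  qed
  have opn: "openin X (U k)" for k
  proof (subst openin_subopen, intro ballI)
    fix x assume "x \<in> U k"
    then show "\<exists>T. openin X T \<and> x \<in> T \<and> T \<subseteq> U k" using local by blast
  qed
  have cont: "continuous_map (subtopology X (U k)) euclidean (p k)" for k
    by (rule cont_local) (use local in blast)
  have cover: "(\<Union>k\<le>CARD('n). U k) = topspace X"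
  proof
    show "(\<Union>k\<le>CARD('n). U k) \<subseteq> topspace X" using Usub by blast
    show "topspace X \<subseteq> (\<Union>k\<le>CARD('n). U k)"
    proof
      fix x assume xt: "x \<in> topspace X"
      obtain s \<delta> where sd: "0 < \<delta>" "0 < s - \<delta>" "s + \<delta> < 1" "\<forall>i. \<delta> < \<bar>slam (b x) i - s\<bar>"
        using exists_valid[of "slam (b x)"] by blast
      define k where "k = card {i. s < slam (b x) i}"
      have "k \<le> CARD('n)" unfolding k_def by (rule card_mono) auto
      moreover have "valid (b x) s \<delta> k" using sd by (simp add: valid_def k_def)
      ultimately show "x \<in> (\<Union>k\<le>CARD('n). U k)" using xt by (auto simp: U_def)
    qed
  qed
  have ord: "mle (p k x) (p l x)" if kl: "k \<le> l" and xk: "x \<in> U k" and xl: "x \<in> U l" for k l x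
  proof -
    from xk obtain s \<delta> where xt: "x \<in> topspace X" and v: "valid (b x) s \<delta> k" by (auto simp: U_def)
    from xl obtain s' \<delta>' where v': "valid (b x) s' \<delta>' l" by (auto simp: U_def)
    have hx: "cadj (b x) = b x" using hb xt by simp
    note sp = spec_props[OF hx]
    have "p l x - p k x = cal (sU (b x)) (\<lambda>i. ind (b x) s' i - ind (b x) s i)"
      by (simp add: pk[OF v] pk[OF v'] cal_diff)
    moreover have "mproj (cal (sU (b x)) (\<lambda>i. ind (b x) s' i - ind (b x) s i))"
    proof (rule cal_proj[OF sp(1)])
      fix i
      show "ind (b x) s' i - ind (b x) s i = 0 \<or> ind (b x) s' i - ind (b x) s i = 1"
        using valid_ord[OF v v' kl, of i] by (auto simp: ind_def)
    qed
    ultimately show ?thesis unfolding mle_def using proj_pos by metis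
  qed
  show ?thesis
    apply (rule exI[of _ U], rule exI[of _ p])
    using opn cont props cover ord by blast
qed

end
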